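(* Let $\mathcal{O}\subset\mathbb{R}^{2}$ be an oval with support parametrization $\gamma$ and centrix $\mathbf{c}:S^{1}\to\mathbb{R}^{2}$. Then $\mathbf{c}$ coincides with the even part $\frac12(\gamma(\theta)+\gamma(\theta+\pi))$ of $\gamma$. Moreover $\mathbf{c}$ is constant if and only if $\mathcal{O}$ is central, and in that case, writing $\mathbf{c}$ for this constant, the odd part $\frac12(\gamma(\theta)-\gamma(\theta+\pi))$ of $\gamma$ support-parametrizes the origin-centered oval $\mathcal{O}-\mathbf{c}$.
   Context: Identify $\mathbb{R}^{2}\cong\mathbb{C}$. An oval is a $C^{2}$ embedded closed plane curve with nowhere-vanishing curvature; it is central if invariant under reflection through some point. A map $\gamma:S^{1}\to\mathbb{R}^{2}$ (viewed as $2\pi$-periodic on $\mathbb{R}$) support-parametrizes $\mathcal{O}$ if it parametrizes $\mathcal{O}$ and $\gamma'(\theta)=|\gamma'(\theta)|\,ie^{i\theta}$ for all $\theta$ (it is the inverse of the outer unit normal map). For $\theta$, the $\theta$-diameter of $\mathcal{O}$ is the segment joining the two points of $\mathcal{O}$ whose tangent lines are perpendicular to $e^{i\theta}$; $\mathbf{c}(\theta)$ is its midpoint, and the map $\mathbf{c}$ is the centrix. *)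

theory Defs
  imports "HOL-Analysis.Analysis"
begin

text \<open>We identify the plane with the complex numbers. A curve is a 2pi-periodic map
  real => complex; the circle S^1 is identified with R/(2 pi Z).\<close>

text \<open>A regular C^2 simple closed 2pi-periodic parametrization of Ov with nowhere-vanishing
  curvature (curvature sign given by Im(conj(p') * p'')).\<close>
definition oval_param :: "complex set \<Rightarrow> (real \<Rightarrow> complex) \<Rightarrow> bool" where
  "oval_param Ov p \<longleftrightarrow>
     (\<exists>p' p''. (\<forall>t. (p has_vector_derivative p' t) (at t)) \<and>
               (\<forall>t. (p' has_vector_derivative p'' t) (at t)) \<and>
               continuous_on UNIV p'' \<and>
               (\<forall>t. p' t \<noteq> 0) \<and>
               (\<forall>t. Im (cnj (p' t) * p'' t) \<noteq> 0)) \<and>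
     (\<forall>t. p (t + 2 * pi) = p t) \<and>
     inj_on p {0..<2 * pi} \<and>
     Ov = p ` UNIV"

definition oval :: "complex set \<Rightarrow> bool" where
  "oval Ov \<longleftrightarrow> (\<exists>p. oval_param Ov p)"

definition central :: "complex set \<Rightarrow> bool" where
  "central Ov \<longleftrightarrow> (\<exists>c. (\<lambda>z. 2 * c - z) ` Ov = Ov)"

definition support_param :: "complex set \<Rightarrow> (real \<Rightarrow> complex) \<Rightarrow> bool" where
  "support_param Ov \<gamma> \<longleftrightarrow>
     (\<forall>\<theta>. \<gamma> (\<theta> + 2 * pi) = \<gamma> \<theta>) \<and>
     inj_on \<gamma> {0..<2 * pi} \<and>
     \<gamma> ` UNIV = Ov \<and>
     (\<forall>\<theta>. \<exists>v. (\<gamma> has_vector_derivative v) (at \<theta>) \<and>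
              v = complex_of_real (cmod v) * (\<i> * cis \<theta>))"

definition tangent_perp_points :: "complex set \<Rightarrow> real \<Rightarrow> complex set" where
  "tangent_perp_points Ov \<theta> =
     {z \<in> Ov. \<exists>p t. oval_param Ov p \<and> z = p t \<and>
                 Re (vector_derivative p (at t) * cnj (cis \<theta>)) = 0}"

definition centrix :: "complex set \<Rightarrow> real \<Rightarrow> complex" where
  "centrix Ov \<theta> = (SOME m. \<exists>a b. a \<noteq> b \<and> tangent_perp_points Ov \<theta> = {a, b} \<and> m = (a + b) / 2)"

end

theory Submission
  imports Defs
begin


lemma per_nat:
  assumes "\<forall>\<theta>. \<gamma> (\<theta> + 2*pi) = (\<gamma> \<theta> :: complex)"
  shows "\<gamma> (x + 2*pi * real n) = \<gamma> x"
proof (induction n)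
  case 0 then show ?case by simp
next
  case (Suc n)
  have "\<gamma> (x + 2*pi * real (Suc n)) = \<gamma> ((x + 2*pi * real n) + 2*pi)"
    by (simp add: algebra_simps)
  also have "\<dots> = \<gamma> (x + 2*pi * real n)" using assms by blast
  finally show ?case using Suc by simp
qed

lemma per_int:
  assumes "\<forall>\<theta>. \<gamma> (\<theta> + 2*pi) = (\<gamma> \<theta> :: complex)"
  shows "\<gamma> (x + 2*pi * of_int k) = \<gamma> x"
proof (cases "k \<ge> 0")
  case True
  then obtain n where "k = int n" by (metis nonneg_eq_int)
  then show ?thesis using per_nat[OF assms, of x n] by simp
next
  case False
  define n where "n = nat (-k)"
  have n: "k = - int n" using False unfolding n_def by simp
  have "\<gamma> ((x + 2*pi * of_int k) + 2*pi * real n) = \<gamma> (x + 2*pi * of_int k)"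
    by (rule per_nat[OF assms])
  then show ?thesis using n by (simp add: algebra_simps)
qed

lemma red_mod:
  "x - 2*pi * of_int \<lfloor>x/(2*pi)\<rfloor> \<in> {0..<2*pi}"
proof -
  have p: "2*pi > 0" by simp
  have a: "of_int \<lfloor>x/(2*pi)\<rfloor> \<le> x/(2*pi)" by (rule of_int_floor_le)
  have b: "x/(2*pi) < of_int \<lfloor>x/(2*pi)\<rfloor> + 1" by (rule real_of_int_floor_add_one_gt)
  from mult_left_mono[OF a, of "2*pi"] have "2*pi * of_int \<lfloor>x/(2*pi)\<rfloor> \<le> x" by simp
  moreover from mult_strict_left_mono[OF b p] have "x < 2*pi*(of_int \<lfloor>x/(2*pi)\<rfloor> + 1)" by simp
  ultimately show ?thesis by (simp add: algebra_simps)
qed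

lemma per_eq:
  assumes per: "\<forall>\<theta>. \<gamma> (\<theta> + 2*pi) = (\<gamma> \<theta> :: complex)" and inj: "inj_on \<gamma> {0..<2*pi}"
    and eq: "\<gamma> x = \<gamma> y"
  shows "\<exists>k::int. y = x + 2*pi * of_int k"
proof -
  define a where "a = \<lfloor>x/(2*pi)\<rfloor>"
  define b where "b = \<lfloor>y/(2*pi)\<rfloor>"
  have ga: "\<gamma> (x - 2*pi * of_int a) = \<gamma> x"
    using per_int[OF per, of "x - 2*pi * of_int a" a] by simp
  have gb: "\<gamma> (y - 2*pi * of_int b) = \<gamma> y"
    using per_int[OF per, of "y - 2*pi * of_int b" b] by simp
  have "x - 2*pi * of_int a = y - 2*pi * of_int b"
    using inj_onD[OF inj _ red_mod[of x] red_mod[of y]] ga gb eq unfolding a_def b_def by simp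
  then have "y = x + 2*pi * of_int (b - a)" by (simp add: algebra_simps)
  then show ?thesis by blast
qed



lemma sp_deriv:
  assumes "support_param Ov \<gamma>"
  shows "\<exists>d\<ge>0. (\<gamma> has_vector_derivative (complex_of_real d * (\<i> * cis \<theta>))) (at \<theta>)"
proof -
  from assms obtain v where "(\<gamma> has_vector_derivative v) (at \<theta>)" "v = complex_of_real (cmod v) * (\<i> * cis \<theta>)"
    unfolding support_param_def by blast
  then show ?thesis by (intro exI[of _ "cmod v"]) auto
qed

lemma sin_tan_bound:
  fixes x \<delta> :: real
  assumes "\<bar>x\<bar> \<le> \<delta>" "\<delta> < pi/2"
  shows "\<bar>sin x\<bar> \<le> tan \<delta> * cos x"
proof -
  have c: "cos x > 0" using assms by (intro cos_gt_zero_pi) auto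
  have t1: "tan x \<le> tan \<delta>" using assms by (intro tan_mono_le) auto
  have t2: "tan (-x) \<le> tan \<delta>" using assms by (intro tan_mono_le) auto
  have "sin x = tan x * cos x" using c by (simp add: tan_def)
  then have "sin x \<le> tan \<delta> * cos x" using t1 c by (simp add: mult_right_mono)
  moreover have "(- tan x) * cos x \<le> tan \<delta> * cos x" using t2 c by (intro mult_right_mono) auto
  then have "- sin x \<le> tan \<delta> * cos x" using c by (simp add: tan_def)
  ultimately show ?thesis by linarith
qed

lemma cone_bound:
  assumes sp: "support_param Ov \<gamma>" and d: "0 < \<delta>" "\<delta> < pi/2" and psi: "\<bar>\<psi> - \<phi>\<bar> \<le> \<delta>"
  shows "\<bar>Re ((\<gamma> \<psi> - \<gamma> \<phi>) * cnj (cis \<phi>))\<bar> \<le> tan \<delta> * cmod (\<gamma> \<psi> - \<gamma> \<phi>)"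
proof -
  define g where "g u = Re ((\<gamma> u - \<gamma> \<phi>) * cnj (cis \<phi>))" for u
  define k where "k u = Im ((\<gamma> u - \<gamma> \<phi>) * cnj (cis \<phi>))" for u
  have tpos: "tan \<delta> \<ge> 0" using tan_mono_le[of 0 \<delta>] d by simp
  have der: "\<exists>D1 D2. (g has_real_derivative D1) (at u) \<and> (k has_real_derivative D2) (at u)
      \<and> \<bar>D1\<bar> \<le> tan \<delta> * D2" if u: "\<bar>u - \<phi>\<bar> \<le> \<delta>" for u
  proof -
    obtain dd where dd: "dd \<ge> 0" "(\<gamma> has_vector_derivative (complex_of_real dd * (\<i> * cis u))) (at u)"
      using sp_deriv[OF sp] by blast
    have h: "((\<lambda>u. (\<gamma> u - \<gamma> \<phi>) * cnj (cis \<phi>)) has_vector_derivative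
              (complex_of_real dd * (\<i> * cis u)) * cnj (cis \<phi>)) (at u)"
      using has_vector_derivative_mult_left[OF has_vector_derivative_diff[OF dd(2) has_vector_derivative_const[of "\<gamma> \<phi>"]], of "cnj (cis \<phi>)"]
      by simp
    have e: "(complex_of_real dd * (\<i> * cis u)) * cnj (cis \<phi>) = complex_of_real dd * (\<i> * cis (u - \<phi>))"
      using cis_mult[of u "- \<phi>"] by (simp add: cis_cnj algebra_simps)
    have hg: "(g has_real_derivative (- dd * sin (u - \<phi>))) (at u)"
      using has_field_derivative_Re[OF h] unfolding e g_def by simp
    have hk: "(k has_real_derivative (dd * cos (u - \<phi>))) (at u)"
      using has_field_derivative_Im[OF h] unfolding e k_def by simp
    have "\<bar>- dd * sin (u - \<phi>)\<bar> = dd * \<bar>sin (u - \<phi>)\<bar>" using dd(1) by (simp add: abs_mult)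
    also have "\<dots> \<le> dd * (tan \<delta> * cos (u - \<phi>))"
      using sin_tan_bound[OF u d(2)] dd(1) by (intro mult_left_mono) auto
    finally show ?thesis using hg hk by (intro exI[of _ "- dd * sin (u - \<phi>)"] exI[of _ "dd * cos (u - \<phi>)"]) (auto simp: algebra_simps)
  qed
  define H1 where "H1 u = tan \<delta> * k u - g u" for u
  define H2 where "H2 u = tan \<delta> * k u + g u" for u
  have dH1: "\<exists>y. DERIV H1 u :> y \<and> y \<ge> 0" if uu: "\<bar>u - \<phi>\<bar> \<le> \<delta>" for u
  proof -
    obtain D1 D2 where D: "(g has_real_derivative D1) (at u)" "(k has_real_derivative D2) (at u)" "\<bar>D1\<bar> \<le> tan \<delta> * D2"
      using der[OF uu] by blast
    have "DERIV H1 u :> tan \<delta> * D2 - D1" unfolding H1_def[abs_def] using D(1,2) by (auto intro!: derivative_eq_intros)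
    then show ?thesis using D(3) by (intro exI[of _ "tan \<delta> * D2 - D1"]) auto
  qed
  have dH2: "\<exists>y. DERIV H2 u :> y \<and> y \<ge> 0" if uu: "\<bar>u - \<phi>\<bar> \<le> \<delta>" for u
  proof -
    obtain D1 D2 where D: "(g has_real_derivative D1) (at u)" "(k has_real_derivative D2) (at u)" "\<bar>D1\<bar> \<le> tan \<delta> * D2"
      using der[OF uu] by blast
    have "DERIV H2 u :> tan \<delta> * D2 + D1" unfolding H2_def[abs_def] using D(1,2) by (auto intro!: derivative_eq_intros)
    then show ?thesis using D(3) by (intro exI[of _ "tan \<delta> * D2 + D1"]) auto
  qed
  have z: "H1 \<phi> = 0" "H2 \<phi> = 0" unfolding H1_def H2_def g_def k_def by auto
  have kb: "\<bar>k \<psi>\<bar> \<le> cmod (\<gamma> \<psi> - \<gamma> \<phi>)"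
    unfolding k_def using abs_Im_le_cmod[of "(\<gamma> \<psi> - \<gamma> \<phi>) * cnj (cis \<phi>)"] by (simp add: norm_mult)
  have m1: "tan \<delta> * k \<psi> \<le> tan \<delta> * \<bar>k \<psi>\<bar>" "- (tan \<delta> * k \<psi>) \<le> tan \<delta> * \<bar>k \<psi>\<bar>"
    using tpos mult_left_mono[of "k \<psi>" "\<bar>k \<psi>\<bar>" "tan \<delta>"] mult_left_mono[of "- k \<psi>" "\<bar>k \<psi>\<bar>" "tan \<delta>"] by auto
  have "\<bar>g \<psi>\<bar> \<le> tan \<delta> * \<bar>k \<psi>\<bar>"
  proof (cases "\<phi> \<le> \<psi>")
    case True
    have "H1 \<phi> \<le> H1 \<psi>" by (rule DERIV_nonneg_imp_nondecreasing[OF True], rule dH1) (use psi in auto)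
    moreover have "H2 \<phi> \<le> H2 \<psi>" by (rule DERIV_nonneg_imp_nondecreasing[OF True], rule dH2) (use psi in auto)
    ultimately show ?thesis using z m1 unfolding H1_def H2_def by linarith
  next
    case False
    then have F: "\<psi> \<le> \<phi>" by simp
    have "H1 \<psi> \<le> H1 \<phi>" by (rule DERIV_nonneg_imp_nondecreasing[OF F], rule dH1) (use psi in auto)
    moreover have "H2 \<psi> \<le> H2 \<phi>" by (rule DERIV_nonneg_imp_nondecreasing[OF F], rule dH2) (use psi in auto)
    ultimately show ?thesis using z m1 unfolding H1_def H2_def by linarith
  qed
  also have "\<dots> \<le> tan \<delta> * cmod (\<gamma> \<psi> - \<gamma> \<phi>)" using kb tpos by (rule mult_left_mono)
  finally show ?thesis unfolding g_def .
qed



lemma sp_facts: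
  assumes "support_param Ov \<gamma>"
  shows "\<forall>\<theta>. \<gamma> (\<theta> + 2*pi) = \<gamma> \<theta>" "inj_on \<gamma> {0..<2*pi}" "\<gamma> ` UNIV = Ov" "continuous_on UNIV \<gamma>"
proof -
  show "\<forall>\<theta>. \<gamma> (\<theta> + 2*pi) = \<gamma> \<theta>" "inj_on \<gamma> {0..<2*pi}" "\<gamma> ` UNIV = Ov"
    using assms unfolding support_param_def by auto
  have "isCont \<gamma> x" for x
  proof -
    obtain d where "(\<gamma> has_vector_derivative (complex_of_real d * (\<i> * cis x))) (at x)"
      using sp_deriv[OF assms] by blast
    then show ?thesis using has_vector_derivative_continuous by blast
  qed
  then show "continuous_on UNIV \<gamma>" by (simp add: continuous_at_imp_continuous_on)
qed

lemma notinK: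
  assumes sp: "support_param Ov \<gamma>" and d: "0 < \<delta>" "\<delta> < pi"
  shows "\<gamma> \<phi> \<notin> \<gamma> ` {\<phi>+\<delta>..\<phi>+2*pi-\<delta>}"
proof
  assume "\<gamma> \<phi> \<in> \<gamma> ` {\<phi>+\<delta>..\<phi>+2*pi-\<delta>}"
  then obtain u where u: "u \<in> {\<phi>+\<delta>..\<phi>+2*pi-\<delta>}" "\<gamma> \<phi> = \<gamma> u" by auto
  obtain k :: int where k: "u = \<phi> + 2*pi * of_int k"
    using per_eq[OF sp_facts(1,2)[OF sp] u(2)] by blast
  from u(1) k have b: "\<delta> \<le> 2*pi * of_int k" "2*pi * of_int k \<le> 2*pi - \<delta>" by auto
  have "0 < 2*pi * of_int k" "2*pi * of_int k < 2*pi * 1" using b d by linarith+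
  then have "0 < real_of_int k" "real_of_int k < 1"
    by (simp_all add: zero_less_mult_iff)
  then have "0 < k" "k < 1" by linarith+
  then show False by simp
qed

lemma local_param:
  assumes sp: "support_param Ov \<gamma>" and d: "0 < \<delta>" "\<delta> < pi"
    and z: "z \<in> Ov" "z \<notin> \<gamma> ` {\<phi>+\<delta>..\<phi>+2*pi-\<delta>}"
  shows "\<exists>u. \<bar>u - \<phi>\<bar> \<le> \<delta> \<and> z = \<gamma> u"
proof -
  obtain u where u: "z = \<gamma> u" using z(1) sp_facts(3)[OF sp] by auto
  define a where "a = \<lfloor>(u - \<phi> + \<delta>)/(2*pi)\<rfloor>"
  define u' where "u' = u - 2*pi * of_int a"
  have r: "(u - \<phi> + \<delta>) - 2*pi * of_int a \<in> {0..<2*pi}" unfolding a_def by (rule red_mod)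
  have gu: "\<gamma> u' = \<gamma> u" using per_int[OF sp_facts(1)[OF sp], of u' a] unfolding u'_def by simp
  have "u' \<le> \<phi> + \<delta>"
  proof (rule ccontr)
    assume "\<not> u' \<le> \<phi> + \<delta>"
    then have "u' \<in> {\<phi>+\<delta>..\<phi>+2*pi-\<delta>}" using r unfolding u'_def by auto
    then have "\<gamma> u' \<in> \<gamma> ` {\<phi>+\<delta>..\<phi>+2*pi-\<delta>}" by blast
    then show False using z(2) gu u by simp
  qed
  moreover have "\<phi> - \<delta> \<le> u'" using r unfolding u'_def by auto
  ultimately show ?thesis using gu u by (intro exI[of _ u']) auto
qed

lemma eventually_local:
  assumes sp: "support_param Ov \<gamma>" and d: "0 < \<delta>" "\<delta> < pi"
    and pc: "isCont p t" and img: "\<forall>s. p s \<in> Ov" and pt: "p t = \<gamma> \<phi>"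
  shows "eventually (\<lambda>s. \<exists>u. \<bar>u - \<phi>\<bar> \<le> \<delta> \<and> p s = \<gamma> u) (at t)"
proof -
  define K where "K = \<gamma> ` {\<phi>+\<delta>..\<phi>+2*pi-\<delta>}"
  have "compact K" unfolding K_def
    by (intro compact_continuous_image continuous_on_subset[OF sp_facts(4)[OF sp]]) auto
  then have o: "open (- K)" by (simp add: compact_imp_closed open_Compl)
  have "p t \<in> - K" using notinK[OF sp d] pt unfolding K_def by auto
  then have "eventually (\<lambda>s. p s \<in> - K) (at t)"
    using topological_tendstoD[OF pc[unfolded isCont_def] o] by blast
  then show ?thesis
  proof (rule eventually_mono)
    fix s assume "p s \<in> - K"
    then show "\<exists>u. \<bar>u - \<phi>\<bar> \<le> \<delta> \<and> p s = \<gamma> u"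
      using local_param[OF sp d, of "p s" \<phi>] img unfolding K_def by auto
  qed
qed



lemma tangent_bound:
  assumes sp: "support_param Ov \<gamma>" and d: "0 < \<delta>" "\<delta> < pi/2"
    and pd: "(p has_vector_derivative w) (at t)" and img: "\<forall>s. p s \<in> Ov" and pt: "p t = \<gamma> \<phi>"
  shows "\<bar>Re (w * cnj (cis \<phi>))\<bar> \<le> tan \<delta> * cmod w"
proof -
  define c where "c = cnj (cis \<phi>)"
  have cm: "cmod c = 1" unfolding c_def by simp
  have pc: "isCont p t" using has_vector_derivative_continuous[OF pd] by simp
  have ev: "eventually (\<lambda>s. \<exists>u. \<bar>u - \<phi>\<bar> \<le> \<delta> \<and> p s = \<gamma> u) (at t)"
    using eventually_local[OF sp _ _ pc img pt] d by simp
  define Z where "Z s = ((p s - p t) * c) / complex_of_real (s - t)" for s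
  have pdc: "((\<lambda>s. p s * c) has_vector_derivative w * c) (at t)"
    using has_vector_derivative_mult_left[OF pd] .
  have lre: "((\<lambda>s. Re (Z s)) \<longlongrightarrow> Re (w * c)) (at t)"
  proof -
    have "((\<lambda>y. (Re (p y * c) - Re (p t * c)) / (y - t)) \<longlongrightarrow> Re (w * c)) (at t)"
      using has_field_derivative_Re[OF pdc] unfolding has_field_derivative_iff .
    then show ?thesis unfolding Z_def by (simp add: Re_divide_of_real algebra_simps)
  qed
  have lim: "((\<lambda>s. Im (Z s)) \<longlongrightarrow> Im (w * c)) (at t)"
  proof -
    have "((\<lambda>y. (Im (p y * c) - Im (p t * c)) / (y - t)) \<longlongrightarrow> Im (w * c)) (at t)"
      using has_field_derivative_Im[OF pdc] unfolding has_field_derivative_iff .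
    then show ?thesis unfolding Z_def by (simp add: Im_divide_of_real algebra_simps)
  qed
  have lZ: "(Z \<longlongrightarrow> w * c) (at t)" using lre lim by (simp add: tendsto_complex_iff)
  have ineq: "eventually (\<lambda>s. \<bar>Re (Z s)\<bar> \<le> tan \<delta> * cmod (Z s)) (at t)"
    using ev
  proof (rule eventually_mono)
    fix s assume "\<exists>u. \<bar>u - \<phi>\<bar> \<le> \<delta> \<and> p s = \<gamma> u"
    then obtain u where u: "\<bar>u - \<phi>\<bar> \<le> \<delta>" "p s = \<gamma> u" by blast
    have cb: "\<bar>Re ((p s - p t) * c)\<bar> \<le> tan \<delta> * cmod ((p s - p t) * c)"
      using cone_bound[OF sp d u(1)] u(2) pt cm unfolding c_def by (simp add: norm_mult)
    have "\<bar>Re (Z s)\<bar> = \<bar>Re ((p s - p t) * c)\<bar> / \<bar>s - t\<bar>"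
      unfolding Z_def by (simp add: Re_divide_of_real abs_divide)
    also have "\<dots> \<le> tan \<delta> * cmod ((p s - p t) * c) / \<bar>s - t\<bar>"
      using cb by (simp add: divide_right_mono)
    also have "\<dots> = tan \<delta> * cmod (Z s)"
      unfolding Z_def by (simp add: norm_divide flip: of_real_diff)
    finally show "\<bar>Re (Z s)\<bar> \<le> tan \<delta> * cmod (Z s)" .
  qed
  have "\<bar>Re (w * c)\<bar> \<le> tan \<delta> * cmod (w * c)"
    by (rule tendsto_le[OF _ tendsto_mult[OF tendsto_const tendsto_norm[OF lZ]] tendsto_rabs[OF lre] ineq]) simp
  then show ?thesis unfolding c_def by (simp add: norm_mult)
qed

lemma tangent_zero:
  assumes sp: "support_param Ov \<gamma>"
    and pd: "(p has_vector_derivative w) (at t)" and img: "\<forall>s. p s \<in> Ov" and pt: "p t = \<gamma> \<phi>"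
  shows "Re (w * cnj (cis \<phi>)) = 0"
proof (rule ccontr)
  define r where "r = \<bar>Re (w * cnj (cis \<phi>))\<bar>"
  assume "Re (w * cnj (cis \<phi>)) \<noteq> 0"
  then have r: "r > 0" unfolding r_def by simp
  define e where "e = r / (2 * (cmod w + 1))"
  have pos: "2 * (cmod w + 1) > 0" by (smt (verit) norm_ge_zero)
  then have e: "e > 0" unfolding e_def using r by (simp only: divide_pos_pos)
  have "r \<le> tan (arctan e) * cmod w" unfolding r_def
    by (rule tangent_bound[OF sp _ _ pd img pt]) (use e arctan_ubound[of e] zero_less_arctan_iff[of e] in auto)
  also have "\<dots> = e * cmod w" by (simp add: tan_arctan)
  also have "\<dots> < r"
  proof -
    have "e * cmod w \<le> e * (cmod w + 1)" using e by simp
    also have "\<dots> = r / 2" unfolding e_def using pos by (simp add: field_simps)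
    finally show ?thesis using r by simp
  qed
  finally show False by simp
qed



lemma two_perp:
  fixes w :: complex
  assumes "w \<noteq> 0" "Re (w * cnj (cis \<theta>)) = 0" "Re (w * cnj (cis \<phi>)) = 0"
  shows "sin (\<phi> - \<theta>) = 0"
proof -
  define a where "a = Re w"
  define b where "b = Im w"
  have e1: "a * cos \<theta> + b * sin \<theta> = 0" using assms(2) unfolding a_def b_def by simp
  have e2: "a * cos \<phi> + b * sin \<phi> = 0" using assms(3) unfolding a_def b_def by simp
  have e1': "a * cos \<theta> = - (b * sin \<theta>)" "b * sin \<theta> = - (a * cos \<theta>)" using e1 by linarith+
  have e2': "a * cos \<phi> = - (b * sin \<phi>)" "b * sin \<phi> = - (a * cos \<phi>)" using e2 by linarith+
  have "a * sin (\<phi> - \<theta>) = sin \<phi> * (a * cos \<theta>) - sin \<theta> * (a * cos \<phi>)"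
    unfolding sin_diff by (simp only: algebra_simps)
  also have "\<dots> = sin \<phi> * (- (b * sin \<theta>)) - sin \<theta> * (- (b * sin \<phi>))"
    by (simp only: e1'(1) e2'(1))
  also have "\<dots> = 0" by (simp only: algebra_simps) simp
  finally have A: "a * sin (\<phi> - \<theta>) = 0" .
  have "b * sin (\<phi> - \<theta>) = cos \<theta> * (b * sin \<phi>) - cos \<phi> * (b * sin \<theta>)"
    unfolding sin_diff by (simp only: algebra_simps)
  also have "\<dots> = cos \<theta> * (- (a * cos \<phi>)) - cos \<phi> * (- (a * cos \<theta>))"
    by (simp only: e1'(2) e2'(2))
  also have "\<dots> = 0" by (simp only: algebra_simps) simp
  finally have B: "b * sin (\<phi> - \<theta>) = 0" .
  have "a \<noteq> 0 \<or> b \<noteq> 0" using assms(1) unfolding a_def b_def by (simp add: complex_eq_iff)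
  then show ?thesis using A B by auto
qed

lemma tpp:
  assumes ov: "oval Ov" and sp: "support_param Ov \<gamma>"
  shows "tangent_perp_points Ov \<theta> = {\<gamma> \<theta>, \<gamma> (\<theta> + pi)}"
proof
  have per: "\<forall>\<theta>. \<gamma> (\<theta> + 2*pi) = \<gamma> \<theta>" and im: "\<gamma> ` UNIV = Ov" using sp_facts[OF sp] by auto
  show "tangent_perp_points Ov \<theta> \<subseteq> {\<gamma> \<theta>, \<gamma> (\<theta> + pi)}"
  proof
    fix z assume "z \<in> tangent_perp_points Ov \<theta>"
    then obtain p t where z: "z \<in> Ov" "oval_param Ov p" "z = p t"
      and re: "Re (vector_derivative p (at t) * cnj (cis \<theta>)) = 0"
      unfolding tangent_perp_points_def by blast
    from z(2) obtain p' where pd: "\<forall>t. (p has_vector_derivative p' t) (at t)" and nz: "\<forall>t. p' t \<noteq> 0"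
      and pim: "Ov = p ` UNIV"
      unfolding oval_param_def by blast
    have vd: "vector_derivative p (at t) = p' t" using pd vector_derivative_at by blast
    obtain \<phi> where phi: "z = \<gamma> \<phi>" using z(1) im by auto
    have r2: "Re (p' t * cnj (cis \<phi>)) = 0"
      by (rule tangent_zero[OF sp pd[rule_format]]) (use pim z phi in auto)
    have "sin (\<phi> - \<theta>) = 0" using two_perp[OF nz[rule_format] re[unfolded vd] r2] .
    then obtain n :: int where n: "\<phi> - \<theta> = of_int n * pi" using sin_zero_iff_int2 by blast
    show "z \<in> {\<gamma> \<theta>, \<gamma> (\<theta> + pi)}"
    proof (cases "even n")
      case True
      then obtain m where "n = 2 * m" by blast
      then have "\<phi> = \<theta> + 2*pi * of_int m" using n by (simp add: algebra_simps)
      then have "z = \<gamma> \<theta>" using per_int[OF per, of \<theta> m] phi by simp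
      then show ?thesis by simp
    next
      case False
      then obtain m where "n = 2 * m + 1" using oddE by blast
      then have "\<phi> = (\<theta> + pi) + 2*pi * of_int m" using n by (simp add: algebra_simps)
      then have "z = \<gamma> (\<theta> + pi)" using per_int[OF per, of "\<theta> + pi" m] phi by simp
      then show ?thesis by simp
    qed
  qed
  show "{\<gamma> \<theta>, \<gamma> (\<theta> + pi)} \<subseteq> tangent_perp_points Ov \<theta>"
  proof -
    obtain p where op: "oval_param Ov p" using ov unfolding oval_def by blast
    then obtain p' where pd: "\<forall>t. (p has_vector_derivative p' t) (at t)"
      and pim: "Ov = p ` UNIV"
      unfolding oval_param_def by blast
    have vd: "vector_derivative p (at t) = p' t" for t using pd vector_derivative_at by blast
    have mem: "\<gamma> x \<in> tangent_perp_points Ov \<theta>"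
      if x: "\<And>w. Re (w * cnj (cis x)) = 0 \<Longrightarrow> Re (w * cnj (cis \<theta>)) = 0" for x
    proof -
      have gx: "\<gamma> x \<in> Ov" using im by auto
      then obtain t where t: "\<gamma> x = p t" using pim by auto
      have "Re (p' t * cnj (cis x)) = 0"
        by (rule tangent_zero[OF sp pd[rule_format]]) (use pim t in auto)
      then have "Re (vector_derivative p (at t) * cnj (cis \<theta>)) = 0" using x vd by simp
      then show ?thesis using gx t op unfolding tangent_perp_points_def by blast
    qed
    have "\<gamma> \<theta> \<in> tangent_perp_points Ov \<theta>" by (rule mem) simp
    moreover have "\<gamma> (\<theta> + pi) \<in> tangent_perp_points Ov \<theta>"
    proof (rule mem)
      fix w :: complex assume "Re (w * cnj (cis (\<theta> + pi))) = 0"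
      then show "Re (w * cnj (cis \<theta>)) = 0" by (simp flip: minus_cis)
    qed
    ultimately show ?thesis by simp
  qed
qed



lemma neq:
  assumes sp: "support_param Ov \<gamma>"
  shows "\<gamma> \<theta> \<noteq> \<gamma> (\<theta> + pi)"
proof
  assume "\<gamma> \<theta> = \<gamma> (\<theta> + pi)"
  then obtain k :: int where "\<theta> + pi = \<theta> + 2*pi * of_int k"
    using per_eq[OF sp_facts(1,2)[OF sp]] by blast
  then have "pi * 1 = pi * (2 * of_int k)" by (simp add: algebra_simps)
  then have "(1::real) = of_int (2*k)" by simp
  then have "(1::int) = 2 * k" by linarith
  then show False by presburger
qed

lemma centrix_eq:
  assumes ov: "oval Ov" and sp: "support_param Ov \<gamma>"
  shows "centrix Ov \<theta> = (\<gamma> \<theta> + \<gamma> (\<theta> + pi)) / 2"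
proof -
  have T: "tangent_perp_points Ov \<theta> = {\<gamma> \<theta>, \<gamma> (\<theta> + pi)}" by (rule tpp[OF ov sp])
  show ?thesis unfolding centrix_def T
  proof (rule someI2)
    show "\<exists>a b. a \<noteq> b \<and> {\<gamma> \<theta>, \<gamma> (\<theta> + pi)} = {a, b} \<and> (\<gamma> \<theta> + \<gamma> (\<theta> + pi)) / 2 = (a + b) / 2"
      using neq[OF sp] by blast
  next
    fix m assume "\<exists>a b. a \<noteq> b \<and> {\<gamma> \<theta>, \<gamma> (\<theta> + pi)} = {a, b} \<and> m = (a + b) / 2"
    then obtain a b where "{\<gamma> \<theta>, \<gamma> (\<theta> + pi)} = {a, b}" "m = (a + b) / 2" by blast
    then show "m = (\<gamma> \<theta> + \<gamma> (\<theta> + pi)) / 2" by (auto simp: doubleton_eq_iff add.commute)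
  qed
qed

lemma reflect_sp:
  assumes sp: "support_param Ov \<gamma>" and c: "(\<lambda>z. 2 * c - z) ` Ov = Ov"
  shows "support_param Ov (\<lambda>\<theta>. 2 * c - \<gamma> (\<theta> + pi))"
proof -
  note f = sp_facts[OF sp]
  have per: "\<forall>\<theta>. 2 * c - \<gamma> (\<theta> + 2*pi + pi) = 2 * c - \<gamma> (\<theta> + pi)"
    using f(1) by (metis add.commute add.left_commute)
  have inj: "inj_on (\<lambda>\<theta>. 2 * c - \<gamma> (\<theta> + pi)) {0..<2*pi}"
  proof (rule inj_onI)
    fix x y assume x: "x \<in> {0..<2*pi}" and y: "y \<in> {0..<2*pi}"
      and e: "2 * c - \<gamma> (x + pi) = 2 * c - \<gamma> (y + pi)"
    then have "\<gamma> (x + pi) = \<gamma> (y + pi)" by simp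
    then obtain k :: int where k: "y + pi = x + pi + 2*pi * of_int k"
      using per_eq[OF f(1,2)] by blast
    have kk: "y = x + 2*pi * of_int k" using k by simp
    have "2*pi * (-1) < 2*pi * of_int k" "2*pi * of_int k < 2*pi * 1" proof -
      have "0 \<le> x" "x < 2*pi" "0 \<le> y" "y < 2*pi" using x y by auto
      then show "2*pi * (-1) < 2*pi * of_int k" "2*pi * of_int k < 2*pi * 1" using kk by linarith+
    qed
    then have "-1 < real_of_int k" "real_of_int k < 1"
      using mult_less_cancel_left_pos[of "2*pi" "-1" "real_of_int k"] mult_less_cancel_left_pos[of "2*pi" "real_of_int k" 1] pi_gt_zero
      by (simp_all only: mult_pos_pos zero_less_numeral)
    then have "k = 0" by linarith
    then show "x = y" using k by simp
  qed
  have sh: "range (\<lambda>\<theta>. \<gamma> (\<theta> + pi)) = range \<gamma>"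
  proof
    show "range (\<lambda>\<theta>. \<gamma> (\<theta> + pi)) \<subseteq> range \<gamma>" by auto
    show "range \<gamma> \<subseteq> range (\<lambda>\<theta>. \<gamma> (\<theta> + pi))"
    proof
      fix z assume "z \<in> range \<gamma>"
      then obtain x where "z = \<gamma> x" by auto
      then have "z = \<gamma> ((x - pi) + pi)" by simp
      then show "z \<in> range (\<lambda>\<theta>. \<gamma> (\<theta> + pi))" by blast
    qed
  qed
  have im: "(\<lambda>\<theta>. 2 * c - \<gamma> (\<theta> + pi)) ` UNIV = Ov"
  proof -
    have "(\<lambda>\<theta>. 2 * c - \<gamma> (\<theta> + pi)) ` UNIV = (\<lambda>z. 2 * c - z) ` range (\<lambda>\<theta>. \<gamma> (\<theta> + pi))"
      by (simp add: image_image)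
    also have "\<dots> = Ov" using sh f(3) c by simp
    finally show ?thesis .
  qed
  have der: "\<exists>v. ((\<lambda>\<theta>. 2 * c - \<gamma> (\<theta> + pi)) has_vector_derivative v) (at \<theta>) \<and>
              v = complex_of_real (cmod v) * (\<i> * cis \<theta>)" for \<theta>
  proof -
    obtain d where d: "d \<ge> 0" "(\<gamma> has_vector_derivative (complex_of_real d * (\<i> * cis (\<theta> + pi)))) (at (\<theta> + pi))"
      using sp_deriv[OF sp] by blast
    have s: "((\<lambda>x. x + pi) has_vector_derivative 1) (at \<theta>)"
      by (auto intro!: derivative_eq_intros)
    have "(\<gamma> \<circ> (\<lambda>x. x + pi) has_vector_derivative 1 *\<^sub>R (complex_of_real d * (\<i> * cis (\<theta> + pi)))) (at \<theta>)"
      by (rule vector_diff_chain_at[OF s]) (use d in simp)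
    then have "((\<lambda>x. \<gamma> (x + pi)) has_vector_derivative (complex_of_real d * (\<i> * cis (\<theta> + pi)))) (at \<theta>)"
      by (simp add: o_def)
    then have "((\<lambda>x. 2 * c - \<gamma> (x + pi)) has_vector_derivative 0 - (complex_of_real d * (\<i> * cis (\<theta> + pi)))) (at \<theta>)"
      by (intro has_vector_derivative_diff has_vector_derivative_const)
    moreover have "0 - (complex_of_real d * (\<i> * cis (\<theta> + pi))) = complex_of_real d * (\<i> * cis \<theta>)"
      by (simp flip: minus_cis)
    moreover have "cmod (complex_of_real d * (\<i> * cis \<theta>)) = d" using d(1) by (simp add: norm_mult)
    ultimately show ?thesis by auto
  qed
  show ?thesis unfolding support_param_def using per inj im der
    by (simp add: add.commute add.left_commute)
qed



theorem mainTheorem13: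
  fixes Ov :: "complex set" and \<gamma> :: "real \<Rightarrow> complex"
  assumes "oval Ov" and "support_param Ov \<gamma>"
  shows "(\<forall>\<theta>. centrix Ov \<theta> = (\<gamma> \<theta> + \<gamma> (\<theta> + pi)) / 2)
         \<and> ((\<exists>c. \<forall>\<theta>. centrix Ov \<theta> = c) \<longleftrightarrow> central Ov)
         \<and> (\<forall>c. (\<forall>\<theta>. centrix Ov \<theta> = c) \<longrightarrow>
               support_param ((\<lambda>z. z - c) ` Ov) (\<lambda>\<theta>. (\<gamma> \<theta> - \<gamma> (\<theta> + pi)) / 2))"
proof -
  note ov = assms(1) and sp = assms(2)
  note f = sp_facts[OF sp]
  have P1: "\<forall>\<theta>. centrix Ov \<theta> = (\<gamma> \<theta> + \<gamma> (\<theta> + pi)) / 2"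
    using centrix_eq[OF ov sp] by blast
  have refl: "\<gamma> (\<theta> + pi) = 2 * c - \<gamma> \<theta>" if c: "\<forall>\<theta>. centrix Ov \<theta> = c" for c \<theta>
  proof -
    have "(\<gamma> \<theta> + \<gamma> (\<theta> + pi)) / 2 = c" using P1 c by metis
    then show ?thesis by (simp add: field_simps)
  qed
  have P2a: "central Ov" if c: "\<forall>\<theta>. centrix Ov \<theta> = c" for c
  proof -
    have "(\<lambda>z. 2 * c - z) ` Ov = Ov"
    proof
      show "(\<lambda>z. 2 * c - z) ` Ov \<subseteq> Ov"
      proof
        fix z assume "z \<in> (\<lambda>z. 2 * c - z) ` Ov"
        then obtain x where "z = 2 * c - \<gamma> x" using f(3) by auto
        then have "z = \<gamma> (x + pi)" using refl[OF c] by simp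
        then show "z \<in> Ov" using f(3) by auto
      qed
      show "Ov \<subseteq> (\<lambda>z. 2 * c - z) ` Ov"
      proof
        fix z assume "z \<in> Ov"
        then obtain x where x: "z = \<gamma> x" using f(3) by auto
        have "\<gamma> (x + pi) \<in> Ov" using f(3) by auto
        moreover have "z = 2 * c - \<gamma> (x + pi)" using refl[OF c, of x] x by simp
        ultimately show "z \<in> (\<lambda>z. 2 * c - z) ` Ov" by blast
      qed
    qed
    then show ?thesis unfolding central_def by blast
  qed
  have P2b: "\<exists>c. \<forall>\<theta>. centrix Ov \<theta> = c" if cen: "central Ov"
  proof -
    obtain c where c: "(\<lambda>z. 2 * c - z) ` Ov = Ov" using cen unfolding central_def by blast
    note sp2 = reflect_sp[OF sp c]
    have "centrix Ov \<theta> = c" for \<theta>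
    proof -
      have e1: "centrix Ov \<theta> = (\<gamma> \<theta> + \<gamma> (\<theta> + pi)) / 2" using P1 by blast
      have e2: "centrix Ov \<theta> = ((2 * c - \<gamma> (\<theta> + pi)) + (2 * c - \<gamma> (\<theta> + pi + pi))) / 2"
        using centrix_eq[OF ov sp2] by simp
      have "\<gamma> (\<theta> + pi + pi) = \<gamma> \<theta>" using f(1) by (metis add.assoc mult_2 )
      then have e2': "centrix Ov \<theta> = ((2 * c - \<gamma> (\<theta> + pi)) + (2 * c - \<gamma> \<theta>)) / 2" using e2 by simp
      define S where "S = \<gamma> \<theta> + \<gamma> (\<theta> + pi)"
      have h1: "2 * centrix Ov \<theta> = S" using e1 unfolding S_def by (simp add: mult.commute)
      have h2: "2 * centrix Ov \<theta> = 4 * c - S" using e2' unfolding S_def by (simp add: algebra_simps)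
      have hS: "S = 4 * c - S" using h1 h2 by simp
      then have hS2: "S + S = 4 * c" by (simp only: eq_diff_eq)
      have "4 * centrix Ov \<theta> = 2 * centrix Ov \<theta> + 2 * centrix Ov \<theta>" by simp
      also have "\<dots> = S + S" by (simp only: h1)
      also have "\<dots> = 4 * c" by (rule hS2)
      finally show ?thesis by simp
    qed
    then show ?thesis by blast
  qed
  have P3: "support_param ((\<lambda>z. z - c) ` Ov) (\<lambda>\<theta>. (\<gamma> \<theta> - \<gamma> (\<theta> + pi)) / 2)"
    if c: "\<forall>\<theta>. centrix Ov \<theta> = c" for c
  proof -
    have fe: "(\<lambda>\<theta>. (\<gamma> \<theta> - \<gamma> (\<theta> + pi)) / 2) = (\<lambda>\<theta>. \<gamma> \<theta> - c)"
      using refl[OF c] by (auto simp: field_simps)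
    have inj: "inj_on (\<lambda>\<theta>. \<gamma> \<theta> - c) {0..<2*pi}"
      using f(2) by (auto simp: inj_on_def)
    have im: "(\<lambda>\<theta>. \<gamma> \<theta> - c) ` UNIV = (\<lambda>z. z - c) ` Ov"
      using f(3) by (auto simp: image_image)
    have der: "\<exists>v. ((\<lambda>\<theta>. \<gamma> \<theta> - c) has_vector_derivative v) (at \<theta>) \<and>
              v = complex_of_real (cmod v) * (\<i> * cis \<theta>)" for \<theta>
    proof -
      obtain v where v: "(\<gamma> has_vector_derivative v) (at \<theta>)" "v = complex_of_real (cmod v) * (\<i> * cis \<theta>)"
        using sp unfolding support_param_def by blast
      have "((\<lambda>\<theta>. \<gamma> \<theta> - c) has_vector_derivative v - 0) (at \<theta>)"
        by (intro has_vector_derivative_diff v(1) has_vector_derivative_const)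
      then show ?thesis using v(2) by auto
    qed
    show ?thesis unfolding fe support_param_def using f(1) inj im der by simp
  qed
  show ?thesis using P1 P2a P2b P3 by blast
qed

end
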